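(* Let $\langle X,d\rangle$ be a metric space with completion $\langle\widehat{X},\widehat{d}\rangle$. The following are equivalent: (1) $\widehat{X}$ is cofinally Bourbaki quasi-complete; (2) $\widehat{X}$ is cofinally Bourbaki complete and every CBC-regular function from $X$ to any metric space $\langle Y,\rho\rangle$ maps cofinally Bourbaki quasi-Cauchy sequences to cofinally Bourbaki-Cauchy sequences; (3) $\widehat{X}$ is cofinally Bourbaki complete and every real-valued CBC-regular function on $X$ maps cofinally Bourbaki quasi-Cauchy sequences to cofinally Bourbaki-Cauchy sequences; (4) $\widehat{X}$ is cofinally Bourbaki complete and every cofinally Bourbaki quasi-Cauchy sequence in $X$ is cofinally Bourbaki-Cauchy.
   Context: For $\varepsilon>0$, an $\varepsilon$-chain joining $x,y$ is a finite sequence $x=x_0,\dots,x_n=y$ with consecutive distances $<\varepsilon$. A sequence $\langle x_n\rangle$ in a metric space is cofinally Bourbaki quasi-Cauchy if for every $\varepsilon>0$ there is an infinite $N_\varepsilon\subseteq\mathbb{N}$ such that any $x_j,x_k$ with $j,k\in N_\varepsilon$ can be joined by an $\varepsilon$-chain in that space; a space is cofinally Bourbaki quasi-complete if every such sequence has a cluster point. In a metric space $\langle Y,\rho\rangle$ let $S^1_\rho(p,\varepsilon)$ be the open $\varepsilon$-ball about $p$ and $S^{m}_\rho(p,\varepsilon)=\{y:\rho(y,S^{m-1}_\rho(p,\varepsilon))<\varepsilon\}$; a sequence $\langle y_n\rangle$ is cofinally Bourbaki-Cauchy if for every $\varepsilon>0$ there exist an infinite $N_\varepsilon\subseteq\mathbb{N}$,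 $m\in\mathbb{N}$, $p\in Y$ with $y_n\in S^m_\rho(p,\varepsilon)$ for all $n\in N_\varepsilon$. A space is cofinally Bourbaki complete if every cofinally Bourbaki-Cauchy sequence has a cluster point. A function is CBC-regular if it maps cofinally Bourbaki-Cauchy sequences to cofinally Bourbaki-Cauchy sequences. *)

theory Defs
  imports "HOL-Analysis.Analysis"
begin

definition eps_chain :: "'a metric \<Rightarrow> real \<Rightarrow> 'a \<Rightarrow> 'a \<Rightarrow> bool" where
  "eps_chain m e x y \<longleftrightarrow>
     (\<exists>(c :: nat \<Rightarrow> 'a) n. c 0 = x \<and> c n = y \<and> (\<forall>i\<le>n. c i \<in> mspace m) \<and>
        (\<forall>i<n. mdist m (c i) (c (Suc i)) < e))"

definition cbqc_seq :: "'a metric \<Rightarrow> (nat \<Rightarrow> 'a) \<Rightarrow> bool" where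
  "cbqc_seq m s \<longleftrightarrow> range s \<subseteq> mspace m \<and>
     (\<forall>e>0. \<exists>N::nat set. infinite N \<and> (\<forall>j\<in>N. \<forall>k\<in>N. eps_chain m e (s j) (s k)))"

definition has_cluster_point :: "'a metric \<Rightarrow> (nat \<Rightarrow> 'a) \<Rightarrow> bool" where
  "has_cluster_point m s \<longleftrightarrow>
     (\<exists>x\<in>mspace m. \<forall>e>0. infinite {n. s n \<in> mball_of m x e})"

definition cb_quasi_complete :: "'a metric \<Rightarrow> bool" where
  "cb_quasi_complete m \<longleftrightarrow> (\<forall>s. cbqc_seq m s \<longrightarrow> has_cluster_point m s)"

text \<open>Iterated enlargements: bourbaki_S m p e k is S^k(p,e) for k \<ge> 1
  (S^1 is the open ball; S^(k+1) = points at distance < e from S^k, where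
  dist(y,A) < e is unfolded as: some a in A has d(y,a) < e).\<close>
fun bourbaki_S :: "'a metric \<Rightarrow> 'a \<Rightarrow> real \<Rightarrow> nat \<Rightarrow> 'a set" where
  "bourbaki_S m p e 0 = {p}"
| "bourbaki_S m p e (Suc k) = {y \<in> mspace m. \<exists>a\<in>bourbaki_S m p e k. mdist m y a < e}"

definition cbc_seq :: "'a metric \<Rightarrow> (nat \<Rightarrow> 'a) \<Rightarrow> bool" where
  "cbc_seq m s \<longleftrightarrow> range s \<subseteq> mspace m \<and>
     (\<forall>e>0. \<exists>(N::nat set) (k::nat) p. infinite N \<and> k \<ge> 1 \<and> p \<in> mspace m \<and>
        (\<forall>n\<in>N. s n \<in> bourbaki_S m p e k))"

definition cb_complete :: "'a metric \<Rightarrow> bool" where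
  "cb_complete m \<longleftrightarrow> (\<forall>s. cbc_seq m s \<longrightarrow> has_cluster_point m s)"

definition cbc_regular :: "'a metric \<Rightarrow> 'b metric \<Rightarrow> ('a \<Rightarrow> 'b) \<Rightarrow> bool" where
  "cbc_regular mX mY f \<longleftrightarrow> (\<forall>s. cbc_seq mX s \<longrightarrow> cbc_seq mY (f \<circ> s))"

text \<open>Condition (2) for target metric spaces whose points lie in type 'b.\<close>
definition cond2 :: "'a metric \<Rightarrow> 'b itself \<Rightarrow> bool" where
  "cond2 mX _ \<longleftrightarrow> (\<forall>(mY :: 'b metric) f. f \<in> mspace mX \<rightarrow> mspace mY \<longrightarrow> cbc_regular mX mY f \<longrightarrow>
       (\<forall>s. cbqc_seq mX s \<longrightarrow> cbc_seq mY (f \<circ> s)))"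

end

theory Submission
  imports Defs
begin

lemma chain_refl: "x \<in> mspace m \<Longrightarrow> eps_chain m e x x"
  unfolding eps_chain_def by (rule exI[of _ "\<lambda>_. x"], rule exI[of _ 0], auto)

lemma chain_snoc:
  assumes "eps_chain m e x a" "y \<in> mspace m" "mdist m a y < e"
  shows "eps_chain m e x y"
proof -
  obtain c n where c: "c 0 = x" "c n = a" "\<forall>i\<le>n. c i \<in> mspace m" "\<forall>i<n. mdist m (c i) (c (Suc i)) < e"
    using assms(1) unfolding eps_chain_def by blast
  show ?thesis unfolding eps_chain_def
    apply (rule exI[of _ "c(Suc n := y)"], rule exI[of _ "Suc n"])
    using c assms(2,3) by (auto simp: less_Suc_eq le_Suc_eq)
qed

lemma chain_cons:
  assumes "eps_chain m e a z" "x \<in> mspace m" "mdist m x a < e"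
  shows "eps_chain m e x z"
proof -
  obtain c n where c: "c 0 = a" "c n = z" "\<forall>i\<le>n. c i \<in> mspace m" "\<forall>i<n. mdist m (c i) (c (Suc i)) < e"
    using assms(1) unfolding eps_chain_def by blast
  show ?thesis unfolding eps_chain_def
    apply (rule exI[of _ "\<lambda>i. if i = 0 then x else c (i - 1)"], rule exI[of _ "Suc n"])
    using c assms(2,3) by (auto simp: less_Suc_eq_0_disj)
qed

lemma chain_sym:
  assumes "eps_chain m e x y" shows "eps_chain m e y x"
proof -
  have "\<forall>c y. c 0 = x \<and> c n = y \<and> (\<forall>i\<le>n. c i \<in> mspace m) \<and> (\<forall>i<n. mdist m (c i) (c (Suc i)) < e)
     \<longrightarrow> eps_chain m e y x" for n
  proof (induction n)
    case 0 then show ?case by (auto intro: chain_refl)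
  next
    case (Suc n)
    show ?case
    proof (intro allI impI)
      fix c y assume h: "c 0 = x \<and> c (Suc n) = y \<and> (\<forall>i\<le>Suc n. c i \<in> mspace m) \<and> (\<forall>i<Suc n. mdist m (c i) (c (Suc i)) < e)"
      then have "c 0 = x \<and> c n = c n \<and> (\<forall>i\<le>n. c i \<in> mspace m) \<and> (\<forall>i<n. mdist m (c i) (c (Suc i)) < e)"
        by auto
      then have "eps_chain m e (c n) x" using Suc.IH by blast
      moreover have "y \<in> mspace m" using h by auto
      moreover have "mdist m y (c n) < e" using h mdist_commute[of m y "c n"] by auto
      ultimately show "eps_chain m e y x" by (rule chain_cons)
    qed
  qed
  then show ?thesis using assms unfolding eps_chain_def by blast
qed

lemma chain_trans:
  assumes "eps_chain m e x y" "eps_chain m e y z" shows "eps_chain m e x z"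
proof -
  have "\<forall>c z. c 0 = y \<and> c n = z \<and> (\<forall>i\<le>n. c i \<in> mspace m) \<and> (\<forall>i<n. mdist m (c i) (c (Suc i)) < e)
     \<longrightarrow> eps_chain m e x z" for n
  proof (induction n)
    case 0 then show ?case using assms(1) by auto
  next
    case (Suc n)
    show ?case
    proof (intro allI impI)
      fix c z assume h: "c 0 = y \<and> c (Suc n) = z \<and> (\<forall>i\<le>Suc n. c i \<in> mspace m) \<and> (\<forall>i<Suc n. mdist m (c i) (c (Suc i)) < e)"
      then have "c 0 = y \<and> c n = c n \<and> (\<forall>i\<le>n. c i \<in> mspace m) \<and> (\<forall>i<n. mdist m (c i) (c (Suc i)) < e)"
        by auto
      then have "eps_chain m e x (c n)" using Suc.IH by blast
      moreover have "z \<in> mspace m" using h by auto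
      moreover have "mdist m (c n) z < e" using h by auto
      ultimately show "eps_chain m e x z" by (rule chain_snoc)
    qed
  qed
  then show ?thesis using assms(2) unfolding eps_chain_def by blast
qed

lemma S_chain: "p \<in> mspace m \<Longrightarrow> y \<in> bourbaki_S m p e k \<Longrightarrow> eps_chain m e p y"
proof (induction k arbitrary: y)
  case 0 then show ?case by (auto intro: chain_refl)
next
  case (Suc k)
  then obtain a where "a \<in> bourbaki_S m p e k" "y \<in> mspace m" "mdist m y a < e" by auto
  then show ?case using Suc chain_snoc by (metis mdist_commute)
qed

lemma S_sub: "bourbaki_S (submetric M X) p e k \<subseteq> bourbaki_S M p e k"
  by (induction k) auto

lemma S_real_upper: "y \<in> bourbaki_S euclidean_metric p e k \<Longrightarrow> dist y p \<le> real k * e"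
proof (induction k arbitrary: y)
  case 0 then show ?case by simp
next
  case (Suc k)
  then obtain a where "a \<in> bourbaki_S euclidean_metric p e k" "dist y a < e" by auto
  then show ?case using Suc.IH[of a] dist_triangle[of y p a] by (auto simp: algebra_simps)
qed

lemma S_real_lower: "1 \<le> k \<Longrightarrow> dist (y::real) p < real k * e \<Longrightarrow> y \<in> bourbaki_S euclidean_metric p e k"
proof (induction k arbitrary: y)
  case 0 then show ?case by simp
next
  case (Suc k)
  show ?case
  proof (cases "k = 0")
    case True then show ?thesis using Suc.prems by simp
  next
    case False
    show ?thesis
    proof (cases "dist y p < real k * e")
      case True
      then have "y \<in> bourbaki_S euclidean_metric p e k" using Suc.IH False by simp
      moreover have "0 < e" using Suc.prems(2) zero_le_dist[of y p]
        by (smt (verit) mult_nonneg_nonpos of_nat_0_le_iff)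
      ultimately show ?thesis by force
    next
      case F: False
      define a where "a = p + (y - p) * (real k / (real k + 1))"
      have kp: "real k > 0" using False by simp
      have e: "0 < e" using Suc.prems(2) zero_le_dist[of y p]
        by (smt (verit) mult_nonneg_nonpos of_nat_0_le_iff)
      have d: "dist y p < (real k + 1) * e" using Suc.prems(2) by (simp add: add.commute)
      have "dist a p = dist y p * (real k / (real k + 1))"
        unfolding a_def dist_real_def using kp by (simp add: abs_mult)
      also have "\<dots> < real k * e"
      proof -
        have "dist y p * (real k / (real k + 1)) < ((real k + 1) * e) * (real k / (real k + 1))"
          using d kp by (intro mult_strict_right_mono) auto
        also have "\<dots> = real k * e" using kp by (simp add: field_simps)
        finally show ?thesis .
      qed
      finally have "a \<in> bourbaki_S euclidean_metric p e k" using Suc.IH False by simp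
      moreover have "dist y a < e"
      proof -
        have "dist y a = dist y p / (real k + 1)"
          unfolding a_def dist_real_def using kp by (simp add: field_simps abs_mult)
        also have "\<dots> < ((real k + 1) * e) / (real k + 1)"
          using d kp by (intro divide_strict_right_mono) auto
        also have "\<dots> = e" using kp by simp
        finally show ?thesis .
      qed
      ultimately show ?thesis by force
    qed
  qed
qed

lemma cbc_imp_cbqc: assumes "cbc_seq m s" shows "cbqc_seq m s"
  unfolding cbqc_seq_def
proof (intro conjI allI impI)
  show "range s \<subseteq> mspace m" using assms unfolding cbc_seq_def by blast
  fix e :: real assume "e > 0"
  then obtain N k p where h: "infinite N" "p \<in> mspace m" "\<forall>n\<in>N. s n \<in> bourbaki_S m p e k"
    using assms unfolding cbc_seq_def by blast
  have "\<forall>j\<in>N. \<forall>k'\<in>N. eps_chain m e (s j) (s k')"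
  proof (intro ballI)
    fix j k' assume "j \<in> N" "k' \<in> N"
    then have "s j \<in> bourbaki_S m p e k" "s k' \<in> bourbaki_S m p e k" using h(3) by auto
    then have a: "eps_chain m e p (s j)" and b: "eps_chain m e p (s k')"
      using S_chain[OF h(2)] by blast+
    show "eps_chain m e (s j) (s k')" by (rule chain_trans[OF chain_sym[OF a] b])
  qed
  then show "\<exists>N. infinite N \<and> (\<forall>j\<in>N. \<forall>k\<in>N. eps_chain m e (s j) (s k))" using h by blast
qed

lemma cbc_subseq:
  assumes "strict_mono r" "range s \<subseteq> mspace m" "cbc_seq m (s \<circ> r)"
  shows "cbc_seq m s"
  unfolding cbc_seq_def
proof (intro conjI allI impI)
  show "range s \<subseteq> mspace m" by fact
  fix e :: real assume "e > 0"
  then obtain N k p where h: "infinite N" "k \<ge> 1" "p \<in> mspace m" "\<forall>n\<in>N. (s \<circ> r) n \<in> bourbaki_S m p e k"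
    using assms(3) unfolding cbc_seq_def by blast
  have "inj_on r N" using assms(1) by (rule strict_mono_imp_inj_on)
  then have "infinite (r ` N)" using h(1) finite_imageD by blast
  moreover have "\<forall>n\<in>r ` N. s n \<in> bourbaki_S m p e k" using h(4) by auto
  ultimately show "\<exists>N k p. infinite N \<and> 1 \<le> k \<and> p \<in> mspace m \<and> (\<forall>n\<in>N. s n \<in> bourbaki_S m p e k)"
    using h(2,3) by blast
qed

lemma chain_sub: assumes "eps_chain (submetric M X) e x y" shows "eps_chain M e x y"
proof -
  obtain c n where c: "c 0 = x" "c n = y" "\<forall>i\<le>n. c i \<in> mspace (submetric M X)"
     "\<forall>i<n. mdist (submetric M X) (c i) (c (Suc i)) < e"
    using assms unfolding eps_chain_def by blast
  then have "\<forall>i\<le>n. c i \<in> mspace M" "\<forall>i<n. mdist M (c i) (c (Suc i)) < e" by simp_all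
  then show ?thesis unfolding eps_chain_def using c(1,2) by blast
qed

lemma cbqc_sub: assumes "cbqc_seq (submetric M X) s" shows "cbqc_seq M s"
proof -
  have "range s \<subseteq> mspace M" using assms unfolding cbqc_seq_def mspace_submetric by blast
  moreover have "\<exists>N. infinite N \<and> (\<forall>j\<in>N. \<forall>k\<in>N. eps_chain M e (s j) (s k))" if ee: "e > 0" for e
  proof -
    obtain N where "infinite N" "\<forall>j\<in>N. \<forall>k\<in>N. eps_chain (submetric M X) e (s j) (s k)"
      using assms ee unfolding cbqc_seq_def by blast
    then show ?thesis using chain_sub by meson
  qed
  ultimately show ?thesis unfolding cbqc_seq_def by blast
qed

lemma cbc_sub: assumes "cbc_seq (submetric M X) s" shows "cbc_seq M s"
proof -
  have "range s \<subseteq> mspace M" using assms unfolding cbc_seq_def mspace_submetric by blast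
  moreover have "\<exists>N k p. infinite N \<and> 1 \<le> k \<and> p \<in> mspace M \<and> (\<forall>n\<in>N. s n \<in> bourbaki_S M p e k)" if ee: "e > 0" for e
  proof -
    obtain N k p where h: "infinite N" "1 \<le> k" "p \<in> mspace (submetric M X)" "\<forall>n\<in>N. s n \<in> bourbaki_S (submetric M X) p e k"
      using assms ee unfolding cbc_seq_def by meson
    have "p \<in> mspace M" using h(3) by simp
    moreover have "\<forall>n\<in>N. s n \<in> bourbaki_S M p e k" using h(4) S_sub[of M X p e k] by (meson subsetD)
    ultimately show ?thesis using h(1,2) by (intro exI[of _ N] exI[of _ k] exI[of _ p]) simp
  qed
  ultimately show ?thesis unfolding cbc_seq_def by blast
qed

lemma finite_small: "(e::real) > 0 \<Longrightarrow> finite {n::nat. e \<le> 1 / (real n + 1)}"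
proof -
  assume e: "e > 0"
  obtain N where N: "inverse (real (Suc N)) < e" using reals_Archimedean e by blast
  have "{n::nat. e \<le> 1 / (real n + 1)} \<subseteq> {..<N}"
  proof
    fix n assume "n \<in> {n::nat. e \<le> 1 / (real n + 1)}"
    then have h: "e \<le> 1 / (real n + 1)" by simp
    show "n \<in> {..<N}"
    proof (rule ccontr)
      assume "n \<notin> {..<N}"
      then have "real N + 1 \<le> real n + 1" by simp
      then have "1 / (real n + 1) \<le> 1 / (real N + 1)" by (intro divide_left_mono) auto
      then show False using h N by (simp add: inverse_eq_divide add.commute)
    qed
  qed
  then show ?thesis using finite_subset by blast
qed

lemma conv_cbc:
  assumes "range t \<subseteq> X" "X \<subseteq> mspace M" "z \<in> mspace M" "\<And>n. mdist M (t n) z < 1 / (real n + 1)"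
  shows "cbc_seq (submetric M X) t"
  unfolding cbc_seq_def
proof (intro conjI allI impI)
  show "range t \<subseteq> mspace (submetric M X)" using assms by auto
  fix e :: real assume e: "e > 0"
  then obtain n0 where n0: "inverse (real (Suc n0)) < e / 2" using reals_Archimedean
    by (metis half_gt_zero)
  have "t n \<in> bourbaki_S (submetric M X) (t n0) e 1" if "n \<in> {n0..}" for n
  proof -
    have "1 / (real n + 1) \<le> 1 / (real n0 + 1)" using that by (intro divide_left_mono) auto
    then have "mdist M (t n) z < e / 2" "mdist M (t n0) z < e / 2" using assms(4)[of n] assms(4)[of n0] n0
      by (auto simp: inverse_eq_divide add.commute)
    moreover have "mdist M (t n) (t n0) \<le> mdist M (t n) z + mdist M z (t n0)"
      using assms by (intro mdist_triangle) auto
    ultimately have "mdist M (t n) (t n0) < e" by (simp add: mdist_commute)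
    then show ?thesis using assms by auto
  qed
  moreover have "t n0 \<in> mspace (submetric M X)" using assms by auto
  ultimately show "\<exists>N k p. infinite N \<and> 1 \<le> k \<and> p \<in> mspace (submetric M X) \<and> (\<forall>n\<in>N. t n \<in> bourbaki_S (submetric M X) p e k)"
    by (intro exI[of _ "{n0..}"] exI[of _ 1] exI[of _ "t n0"]) (auto simp: infinite_Ici)
qed

lemma cluster_subseq:
  fixes s :: "nat \<Rightarrow> 'a"
  assumes "\<forall>e>0. infinite {n. s n \<in> mball_of m z e}"
  shows "\<exists>r. strict_mono r \<and> (\<forall>k. mdist m (s (r k)) z < 1 / (real k + 1))"
proof -
  have ex: "\<exists>n>a. mdist m (s n) z < 1 / (real k + 1)" for a k
  proof -
    have "(1::real) / (real k + 1) > 0" by simp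
    then have inf: "infinite {n. s n \<in> mball_of m z (1 / (real k + 1))}" using assms by blast
    then obtain n where "n > a" "n \<in> {n. s n \<in> mball_of m z (1 / (real k + 1))}"
      using infinite_nat_iff_unbounded[THEN iffD1, OF inf] by blast
    then show ?thesis by (auto simp: mdist_commute)
  qed
  have "\<exists>f. \<forall>k. mdist m (s (f k)) z < 1 / (real k + 1) \<and> f k < f (Suc k)"
  proof (rule dependent_nat_choice[where P = "\<lambda>k n. mdist m (s n) z < 1 / (real k + 1)" and Q = "\<lambda>k n n'. n < n'"])
    show "\<exists>x. mdist m (s x) z < 1 / (real 0 + 1)" using ex[of 0 0] by blast
    fix x n
    show "\<exists>y. mdist m (s y) z < 1 / (real (Suc n) + 1) \<and> x < y" using ex[of x "Suc n"] by blast
  qed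
  then obtain f where f: "\<forall>k. mdist m (s (f k)) z < 1 / (real k + 1) \<and> f k < f (Suc k)" by blast
  then have "strict_mono f" by (simp add: strict_mono_Suc_iff)
  then show ?thesis using f by blast
qed

lemma P1_sub:
  assumes "cb_quasi_complete M" "X \<subseteq> mspace M" "cbqc_seq (submetric M X) s"
  shows "\<exists>r. strict_mono r \<and> cbc_seq (submetric M X) (s \<circ> r)"
proof -
  have "cbqc_seq M s" by (rule cbqc_sub[OF assms(3)])
  then have "has_cluster_point M s" using assms(1) unfolding cb_quasi_complete_def by blast
  then obtain z where z: "z \<in> mspace M" "\<forall>e>0. infinite {n. s n \<in> mball_of M z e}"
    unfolding has_cluster_point_def by blast
  obtain r where r: "strict_mono r" "\<forall>k. mdist M (s (r k)) z < 1 / (real k + 1)"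
    using cluster_subseq[OF z(2)] by blast
  have "range s \<subseteq> X \<inter> mspace M" using assms(3) unfolding cbqc_seq_def mspace_submetric by blast
  then have "range (s \<circ> r) \<subseteq> X" by auto
  moreover have "\<And>n. mdist M ((s \<circ> r) n) z < 1 / (real n + 1)" using r(2) by simp
  ultimately have "cbc_seq (submetric M X) (s \<circ> r)"
    using conv_cbc[OF _ assms(2) z(1)] by blast
  then show ?thesis using r by blast
qed

lemma approx:
  assumes dense: "mtopology_of Xh closure_of X = mspace Xh" and z: "z \<in> mspace Xh" and r: "r > 0"
  shows "\<exists>y\<in>X. mdist Xh z y < r"
proof -
  have "z \<in> Metric_space.mtopology (mspace Xh) (mdist Xh) closure_of X"
    using dense z by (simp add: mtopology_of_def)
  then show ?thesis using r
    by (auto simp: Metric_space.metric_closure_of[OF Metric_space_mspace_mdist]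
        Metric_space.in_mball[OF Metric_space_mspace_mdist])
qed

lemma tri3:
  assumes "a \<in> mspace m" "b \<in> mspace m" "c \<in> mspace m" "d \<in> mspace m"
  shows "mdist m a d \<le> mdist m a b + mdist m b c + mdist m c d"
  using mdist_triangle[of a m b d] mdist_triangle[of b m c d] assms by linarith

lemma P3_P1:
  assumes sub: "X \<subseteq> mspace Xh"
    and dense: "mtopology_of Xh closure_of X = mspace Xh"
    and cbcomp: "cb_complete Xh"
    and H: "\<forall>f. f \<in> X \<rightarrow> UNIV \<longrightarrow> cbc_regular (submetric Xh X) (euclidean_metric :: real metric) f \<longrightarrow>
                 (\<forall>s. cbqc_seq (submetric Xh X) s \<longrightarrow> cbc_seq (euclidean_metric :: real metric) (f \<circ> s))"
  shows "cb_quasi_complete Xh"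
  unfolding cb_quasi_complete_def
proof (intro allI impI)
  fix s assume s: "cbqc_seq Xh s"
  show "has_cluster_point Xh s"
  proof (rule ccontr)
    assume nc: "\<not> has_cluster_point Xh s"
    define ap where "ap z r = (SOME y. y \<in> X \<and> mdist Xh z y < r)" for z r
    have ap: "ap z r \<in> X \<and> mdist Xh z (ap z r) < r" if zr: "z \<in> mspace Xh" "r > 0" for z r
    proof -
      obtain y where "y \<in> X" "mdist Xh z y < r" using approx[OF dense zr] by blast
      then have "\<exists>y. y \<in> X \<and> mdist Xh z y < r" by blast
      then show ?thesis unfolding ap_def by (rule someI_ex)
    qed
    have sM: "s n \<in> mspace Xh" for n using s unfolding cbqc_seq_def by blast
    define x where "x n = ap (s n) (1 / (real n + 1))" for n
    have xX: "x n \<in> X" and xd: "mdist Xh (s n) (x n) < 1 / (real n + 1)" for n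
      using ap[OF sM, of "1 / (real n + 1)" n] unfolding x_def by auto
    have xM: "x n \<in> mspace Xh" for n using xX sub by auto
    have NCx: "\<forall>z\<in>mspace Xh. \<exists>r>0. finite {n. x n \<in> mball_of Xh z r}"
    proof
      fix z assume z: "z \<in> mspace Xh"
      obtain e where e: "e > 0" "finite {n. s n \<in> mball_of Xh z e}"
        using nc z unfolding has_cluster_point_def by blast
      have "{n. x n \<in> mball_of Xh z (e/2)} \<subseteq> {n. s n \<in> mball_of Xh z e} \<union> {n. e/2 \<le> 1 / (real n + 1)}"
      proof
        fix n assume "n \<in> {n. x n \<in> mball_of Xh z (e/2)}"
        then have d1: "mdist Xh z (x n) < e/2" by simp
        show "n \<in> {n. s n \<in> mball_of Xh z e} \<union> {n. e/2 \<le> 1 / (real n + 1)}"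
        proof (cases "e/2 \<le> 1 / (real n + 1)")
          case False
          have "mdist Xh z (s n) \<le> mdist Xh z (x n) + mdist Xh (x n) (s n)"
            by (rule mdist_triangle[OF z xM[of n] sM[of n]])
          moreover have "mdist Xh (x n) (s n) < 1 / (real n + 1)" using xd[of n] mdist_commute[of Xh "x n" "s n"] by simp
          ultimately have "mdist Xh z (s n) < e" using d1 False by linarith
          then show ?thesis using z sM[of n] by simp
        next
          case True then show ?thesis by blast
        qed
      qed
      moreover have "finite {n. e/2 \<le> 1 / (real n + 1)}" using finite_small[of "e/2"] e by simp
      ultimately have "finite {n. x n \<in> mball_of Xh z (e/2)}" using e(2) finite_subset by blast
      then show "\<exists>r>0. finite {n. x n \<in> mball_of Xh z r}" using e(1) by (intro exI[of _ "e/2"]) auto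
    qed
    have xcbqc: "cbqc_seq (submetric Xh X) x"
      unfolding cbqc_seq_def
    proof (intro conjI allI impI)
      show "range x \<subseteq> mspace (submetric Xh X)" using xX xM by auto
      fix e :: real assume e: "e > 0"
      have e3: "e/3 > 0" using e by simp
      obtain N where N: "infinite N" "\<forall>j\<in>N. \<forall>k\<in>N. eps_chain Xh (e/3) (s j) (s k)"
        using s e3 unfolding cbqc_seq_def by blast
      define N' where "N' = N - {n. e/3 \<le> 1 / (real n + 1)}"
      have "infinite N'" using N(1) finite_small[of "e/3"] e unfolding N'_def by auto
      moreover have "eps_chain (submetric Xh X) e (x j) (x k)" if j: "j \<in> N'" and k: "k \<in> N'" for j k
      proof -
        obtain c n where c: "c 0 = s j" "c n = s k" "\<forall>i\<le>n. c i \<in> mspace Xh"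
            "\<forall>i<n. mdist Xh (c i) (c (Suc i)) < e/3"
          using N(2) j k unfolding N'_def eps_chain_def by blast
        have jj: "1 / (real j + 1) < e/3" "1 / (real k + 1) < e/3" using j k unfolding N'_def by auto
        define c' where "c' i = (if i = 0 then x j else if i = n+2 then x k else ap (c (i-1)) (e/3))" for i
        have cM: "c i \<in> mspace Xh" if "i \<le> n" for i using c(3) that by blast
        have apc: "ap (c i) (e/3) \<in> X" "mdist Xh (c i) (ap (c i) (e/3)) < e/3" if "i \<le> n" for i
          using ap[OF cM[OF that] e3] by auto
        have apM: "ap (c i) (e/3) \<in> mspace Xh" if "i \<le> n" for i using apc(1)[OF that] sub by blast
        have c'M: "c' i \<in> mspace (submetric Xh X)" if ii: "i \<le> n+2" for i
        proof -
          consider "i = 0" | "i = n+2" | "i \<noteq> 0 \<and> i \<noteq> n+2 \<and> i - 1 \<le> n" using ii by linarith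
          then show ?thesis
          proof cases
            case 1 then show ?thesis using xX[of j] xM[of j] by (simp add: c'_def)
          next
            case 2 then show ?thesis using xX[of k] xM[of k] by (simp add: c'_def)
          next
            case 3 then show ?thesis using apc(1)[of "i-1"] apM[of "i-1"] by (simp add: c'_def)
          qed
        qed
        have step: "mdist Xh (c' i) (c' (Suc i)) < e" if ii: "i < n+2" for i
        proof -
          consider "i = 0" | "i = n+1" | "0 < i \<and> i \<le> n" using ii by linarith
          then show ?thesis
          proof cases
            case 1
            then have eq: "c' i = x j" "c' (Suc i) = ap (c 0) (e/3)" unfolding c'_def by auto
            have "mdist Xh (x j) (ap (c 0) (e/3)) \<le> mdist Xh (x j) (c 0) + mdist Xh (c 0) (ap (c 0) (e/3))"
              by (rule mdist_triangle[OF xM cM apM]) simp_all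
            moreover have "mdist Xh (x j) (c 0) < e/3"
              using xd[of j] jj(1) c(1) mdist_commute[of Xh "x j" "s j"] by simp
            moreover have "mdist Xh (c 0) (ap (c 0) (e/3)) < e/3" using apc(2)[of 0] by simp
            ultimately show ?thesis unfolding eq using e by linarith
          next
            case 2
            then have eq: "c' i = ap (c n) (e/3)" "c' (Suc i) = x k" unfolding c'_def by auto
            have "mdist Xh (ap (c n) (e/3)) (x k) \<le> mdist Xh (ap (c n) (e/3)) (c n) + mdist Xh (c n) (x k)"
              by (rule mdist_triangle[OF apM cM xM]) simp_all
            moreover have "mdist Xh (c n) (x k) < e/3"
              using xd[of k] jj(2) c(2) by simp
            moreover have "mdist Xh (ap (c n) (e/3)) (c n) < e/3"
              using apc(2)[of n] mdist_commute[of Xh "ap (c n) (e/3)" "c n"] by simp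
            ultimately show ?thesis unfolding eq using e by linarith
          next
            case 3
            then have eq: "c' i = ap (c (i-1)) (e/3)" "c' (Suc i) = ap (c i) (e/3)" unfolding c'_def by auto
            have i1: "i - 1 \<le> n" "i \<le> n" "Suc (i - 1) = i" "i - 1 < n" using 3 by auto
            have "mdist Xh (ap (c (i-1)) (e/3)) (ap (c i) (e/3)) \<le>
                mdist Xh (ap (c (i-1)) (e/3)) (c (i-1)) + mdist Xh (c (i-1)) (c i) + mdist Xh (c i) (ap (c i) (e/3))"
              by (rule tri3[OF apM[OF i1(1)] cM[OF i1(1)] cM[OF i1(2)] apM[OF i1(2)]])
            moreover have "mdist Xh (c (i-1)) (c i) < e/3" using c(4) i1(4) i1(3) by metis
            moreover have "mdist Xh (ap (c (i-1)) (e/3)) (c (i-1)) < e/3"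
              using apc(2)[OF i1(1)] mdist_commute[of Xh "ap (c (i-1)) (e/3)" "c (i-1)"] by simp
            moreover have "mdist Xh (c i) (ap (c i) (e/3)) < e/3" using apc(2)[OF i1(2)] by simp
            ultimately show ?thesis unfolding eq using e by linarith
          qed
        qed
        have e0: "c' 0 = x j" "c' (n+2) = x k" by (simp_all add: c'_def)
        show ?thesis unfolding eps_chain_def
        proof (intro exI[of _ c'] exI[of _ "n+2"] conjI allI impI)
          show "c' 0 = x j" "c' (n+2) = x k" by (fact e0(1), fact e0(2))
        next
          fix i :: nat assume "i \<le> n+2" then show "c' i \<in> mspace (submetric Xh X)" by (rule c'M)
        next
          fix i :: nat assume "i < n+2" then show "mdist (submetric Xh X) (c' i) (c' (Suc i)) < e"
            unfolding mdist_submetric by (rule step)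
        qed
      qed
      ultimately show "\<exists>N. infinite N \<and> (\<forall>j\<in>N. \<forall>k\<in>N. eps_chain (submetric Xh X) e (x j) (x k))"
        by blast
    qed
    define f where "f y = (if y \<in> range x then real (LEAST n. x n = y) else 0)" for y
    have reg: "cbc_regular (submetric Xh X) euclidean_metric f"
      unfolding cbc_regular_def
    proof (intro allI impI)
      fix t assume t: "cbc_seq (submetric Xh X) t"
      then have "cbc_seq Xh t" by (rule cbc_sub)
      then have "has_cluster_point Xh t" using cbcomp unfolding cb_complete_def by blast
      then obtain z where z: "z \<in> mspace Xh" "\<forall>e>0. infinite {n. t n \<in> mball_of Xh z e}"
        unfolding has_cluster_point_def by blast
      obtain r where r: "r > 0" "finite {n. x n \<in> mball_of Xh z r}" using NCx z by blast
      obtain B where B: "\<forall>m\<in>{n. x n \<in> mball_of Xh z r}. m \<le> B"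
        using r(2) finite_nat_set_iff_bounded_le by blast
      define T where "T = {n. t n \<in> mball_of Xh z r}"
      have T: "infinite T" unfolding T_def using z(2) r(1) by blast
      have fb: "0 \<le> f (t n) \<and> f (t n) \<le> real B" if "n \<in> T" for n
      proof (cases "t n \<in> range x")
        case True
        then obtain m where "x m = t n" by auto
        then have "x (LEAST m. x m = t n) = t n" by (rule LeastI)
        then have "(LEAST m. x m = t n) \<le> B" using B that T_def by auto
        then show ?thesis using True f_def by simp
      qed (simp add: f_def)
      show "cbc_seq euclidean_metric (f \<circ> t)"
        unfolding cbc_seq_def
      proof (intro conjI allI impI)
        show "range (f \<circ> t) \<subseteq> mspace euclidean_metric" by simp
        fix e :: real assume e: "e > 0"
        define k where "k = nat \<lceil>real B / e\<rceil> + 1"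
        have "real B / e < real k" unfolding k_def by linarith
        then have Bk: "real B < real k * e" using e by (simp add: pos_divide_less_eq)
        have "f (t n) \<in> bourbaki_S euclidean_metric 0 e k" if "n \<in> T" for n
          using S_real_lower[of k "f (t n)" 0 e] fb[OF that] Bk k_def by (auto simp: dist_real_def)
        then show "\<exists>N k p. infinite N \<and> 1 \<le> k \<and> p \<in> mspace euclidean_metric \<and>
             (\<forall>n\<in>N. (f \<circ> t) n \<in> bourbaki_S euclidean_metric p e k)"
          using T k_def by (intro exI[of _ T] exI[of _ k] exI[of _ "0::real"]) auto
      qed
    qed
    have fP: "f \<in> X \<rightarrow> UNIV" by simp
    have "cbc_seq euclidean_metric (f \<circ> x)" using H fP reg xcbqc by blast
    then have "\<exists>N k p. infinite N \<and> 1 \<le> k \<and> p \<in> mspace euclidean_metric \<and>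
             (\<forall>n\<in>N. (f \<circ> x) n \<in> bourbaki_S euclidean_metric p 1 k)"
      unfolding cbc_seq_def using zero_less_one by blast
    then obtain N k p where N: "infinite N" "\<forall>n\<in>N. f (x n) \<in> bourbaki_S euclidean_metric p 1 k"
      by auto
    define K where "K = nat \<lceil>\<bar>p\<bar> + real k\<rceil>"
    have "N \<subseteq> (\<Union>m\<le>K. {n. x n = x m})"
    proof
      fix n assume n: "n \<in> N"
      then have "dist (f (x n)) p \<le> real k" using S_real_upper[of "f (x n)" p 1 k] N(2) by simp
      then have fle: "f (x n) \<le> \<bar>p\<bar> + real k" unfolding dist_real_def by linarith
      define m where "m = (LEAST m. x m = x n)"
      have xm: "x m = x n" unfolding m_def by (rule LeastI) (rule refl)
      have "f (x n) = real m" by (simp add: f_def m_def)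
      then have "m \<le> K" using fle unfolding K_def by linarith
      then have "m \<in> {..K}" by simp
      moreover have "n \<in> {n. x n = x m}" using xm by simp
      ultimately show "n \<in> (\<Union>m\<le>K. {n. x n = x m})" by (rule UN_I)
    qed
    moreover have "finite (\<Union>m\<le>K. {n. x n = x m})"
    proof (intro finite_UN_I finite_atMost)
      fix m
      obtain r where r: "r > 0" "finite {n. x n \<in> mball_of Xh (x m) r}" using NCx xM by blast
      have d0: "mdist Xh (x m) (x m) = 0" using mdist_zero[OF xM[of m] xM[of m]] by simp
      have "{n. x n = x m} \<subseteq> {n. x n \<in> mball_of Xh (x m) r}"
      proof
        fix n assume "n \<in> {n. x n = x m}"
        then have "x n = x m" by simp
        then show "n \<in> {n. x n \<in> mball_of Xh (x m) r}" using xM[of m] r(1) d0 by (simp del: mdist_zero)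
      qed
      moreover note r(2)
      ultimately show "finite {n. x n = x m}" using finite_subset by blast
    qed
    ultimately show False using N(1) finite_subset by blast
  qed
qed

lemma P1_cond2:
  assumes "cb_quasi_complete M" "X \<subseteq> mspace M"
  shows "cond2 (submetric M X) TYPE('b)"
  unfolding cond2_def
proof (intro allI impI)
  fix mY :: "'b metric" and f s
  assume f: "f \<in> mspace (submetric M X) \<rightarrow> mspace mY" and reg: "cbc_regular (submetric M X) mY f"
    and s: "cbqc_seq (submetric M X) s"
  obtain r where r: "strict_mono r" "cbc_seq (submetric M X) (s \<circ> r)" using P1_sub[OF assms s] by blast
  have "cbc_seq mY (f \<circ> (s \<circ> r))" using reg r(2) unfolding cbc_regular_def by blast
  then have c: "cbc_seq mY ((f \<circ> s) \<circ> r)" by (simp add: comp_assoc)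
  have "range s \<subseteq> mspace (submetric M X)" using s unfolding cbqc_seq_def by blast
  then have "range (f \<circ> s) \<subseteq> mspace mY" using f by auto
  then show "cbc_seq mY (f \<circ> s)" using cbc_subseq[OF r(1) _ c] by blast
qed

lemma P1_cbc: "cb_quasi_complete M \<Longrightarrow> cb_complete M"
  unfolding cb_quasi_complete_def cb_complete_def using cbc_imp_cbqc by blast

lemma P1_P4:
  assumes "cb_quasi_complete M" "X \<subseteq> mspace M" "cbqc_seq (submetric M X) s"
  shows "cbc_seq (submetric M X) s"
proof -
  obtain r where r: "strict_mono r" "cbc_seq (submetric M X) (s \<circ> r)" using P1_sub[OF assms] by blast
  have "range s \<subseteq> mspace (submetric M X)" using assms(3) unfolding cbqc_seq_def by blast
  then show ?thesis using cbc_subseq[OF r(1) _ r(2)] by blast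
qed

theorem mainTheorem11:
  fixes Xh :: "'a metric" and X :: "'a set"
  assumes complete: "mcomplete_of Xh"
    and sub: "X \<subseteq> mspace Xh"
    and dense: "mtopology_of Xh closure_of X = mspace Xh"
  defines "mX \<equiv> submetric Xh X"
  defines "P1 \<equiv> cb_quasi_complete Xh"
  defines "P3 \<equiv> cb_complete Xh \<and>
             (\<forall>f. f \<in> X \<rightarrow> UNIV \<longrightarrow> cbc_regular mX (euclidean_metric :: real metric) f \<longrightarrow>
                 (\<forall>s. cbqc_seq mX s \<longrightarrow> cbc_seq (euclidean_metric :: real metric) (f \<circ> s)))"
  defines "P4 \<equiv> cb_complete Xh \<and> (\<forall>s. cbqc_seq mX s \<longrightarrow> cbc_seq mX s)"
  shows "(P1 \<longrightarrow> cb_complete Xh \<and> cond2 mX TYPE('b))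
         \<and> (cb_complete Xh \<and> cond2 mX TYPE(real) \<longrightarrow> P1)
         \<and> (P1 \<longleftrightarrow> P3) \<and> (P1 \<longleftrightarrow> P4)"
proof -
  define Q where "Q \<equiv> (\<forall>f. f \<in> X \<rightarrow> UNIV \<longrightarrow> cbc_regular mX (euclidean_metric :: real metric) f \<longrightarrow>
                 (\<forall>s. cbqc_seq mX s \<longrightarrow> cbc_seq (euclidean_metric :: real metric) (f \<circ> s)))"
  have P3Q: "P3 = (cb_complete Xh \<and> Q)" unfolding P3_def Q_def by (rule refl)
  have A1: "P1 \<Longrightarrow> cb_complete Xh \<and> cond2 mX TYPE('b)"
  proof -
    assume p1: P1
    then have q: "cb_quasi_complete Xh" unfolding P1_def .
    show ?thesis unfolding mX_def using P1_cbc[OF q] P1_cond2[OF q sub] by (rule conjI)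
  qed
  have A6: "cond2 mX TYPE(real) \<Longrightarrow> Q"
    unfolding Q_def
  proof (intro allI impI)
    fix f :: "'a \<Rightarrow> real" and s
    assume c2: "cond2 mX TYPE(real)" and f: "f \<in> X \<rightarrow> UNIV"
      and reg: "cbc_regular mX euclidean_metric f" and s: "cbqc_seq mX s"
    have ff: "f \<in> mspace mX \<rightarrow> mspace euclidean_metric" by simp
    have "\<forall>(mY :: real metric) f. f \<in> mspace mX \<rightarrow> mspace mY \<longrightarrow> cbc_regular mX mY f \<longrightarrow>
       (\<forall>s. cbqc_seq mX s \<longrightarrow> cbc_seq mY (f \<circ> s))" using c2 unfolding cond2_def .
    then have "f \<in> mspace mX \<rightarrow> mspace euclidean_metric \<longrightarrow> cbc_regular mX euclidean_metric f \<longrightarrow>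
       (\<forall>s. cbqc_seq mX s \<longrightarrow> cbc_seq euclidean_metric (f \<circ> s))" by blast
    then show "cbc_seq euclidean_metric (f \<circ> s)" using ff reg s by blast
  qed
  have A5: "cb_complete Xh \<Longrightarrow> Q \<Longrightarrow> P1"
    unfolding P1_def Q_def mX_def by (rule P3_P1[OF sub dense])
  have A2: "P1 \<Longrightarrow> P3"
  proof -
    assume p1: P1
    then have q: "cb_quasi_complete Xh" unfolding P1_def .
    have "cond2 mX TYPE(real)" unfolding mX_def by (rule P1_cond2[OF q sub])
    then have "Q" by (rule A6)
    then show P3 unfolding P3Q using P1_cbc[OF q] by blast
  qed
  have A3: "P1 \<Longrightarrow> P4"
  proof -
    assume p1: P1
    then have q: "cb_quasi_complete Xh" unfolding P1_def .
    have "\<forall>s. cbqc_seq mX s \<longrightarrow> cbc_seq mX s" unfolding mX_def using P1_P4[OF q sub] by blast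
    then show P4 unfolding P4_def using P1_cbc[OF q] by blast
  qed
  have A4: "P4 \<Longrightarrow> P3"
  proof -
    assume p4: P4
    have Q unfolding Q_def
    proof (intro allI impI)
      fix f :: "'a \<Rightarrow> real" and s
      assume reg: "cbc_regular mX euclidean_metric f" and s: "cbqc_seq mX s"
      have "cbc_seq mX s" using p4 s unfolding P4_def by blast
      then show "cbc_seq euclidean_metric (f \<circ> s)" using reg unfolding cbc_regular_def by blast
    qed
    moreover have "cb_complete Xh" using p4 unfolding P4_def by blast
    ultimately show P3 unfolding P3Q by blast
  qed
  have B1: "P3 \<Longrightarrow> P1" unfolding P3Q using A5 by blast
  have B2: "cb_complete Xh \<and> cond2 mX TYPE(real) \<longrightarrow> P1" using A6 A5 by blast
  show ?thesis using A1 A2 A3 A4 B1 B2 by blast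
qed

end
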